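(* Let $k \ge 1$ be an integer and $t > 0$ a real number with $t \ge k-1$. Let $(n_s)_{s \ge 1}$ be a sequence of nonnegative integers with only finitely many nonzero terms, and set $N_{\mathrm{seen}} = \sum_{s \ge 1} n_s$. Define $$\widehat{N}_{\mathrm{unseen}}(t) = \sum_{s=1}^{k} h_s\, n_s, \qquad h_s = -(-t)^s\, \mathbb{P}\!\left(\mathrm{Bin}\!\left(k, \tfrac{1}{t+1}\right) \ge s\right),$$ where $\mathrm{Bin}(k,p)$ denotes a binomial random variable with $k$ trials and success probability $p$. Then $$\widehat{N}_{\mathrm{unseen}}(t) \le e^{\frac{kt}{t+1}}\, N_{\mathrm{seen}}.$$
   Context: $n_s$ is interpreted as the number of distinct items observed exactly $s$ times in a sample; $\widehat{N}_{\mathrm{unseen}}(t)$ is the smoothed Good–Turing estimator with truncation level $k$ and extrapolation factor $t$. *)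

theory Defs
  imports "HOL-Probability.Probability"
begin

definition sgt_coeff :: "nat \<Rightarrow> real \<Rightarrow> nat \<Rightarrow> real" where
  "sgt_coeff k t s = - ((- t) ^ s) *
     measure_pmf.prob (binomial_pmf k (1 / (t + 1))) {s..}"

definition N_unseen :: "nat \<Rightarrow> real \<Rightarrow> (nat \<Rightarrow> nat) \<Rightarrow> real" where
  "N_unseen k t n = (\<Sum>s=1..k. sgt_coeff k t s * real (n s))"

definition N_seen :: "(nat \<Rightarrow> nat) \<Rightarrow> nat" where
  "N_seen n = (\<Sum>s\<in>{s. 1 \<le> s \<and> n s \<noteq> 0}. n s)"

end

theory Submission imports Defs begin

lemma tail_bound:
  fixes p :: real
  assumes p0: "0 \<le> p" and p1: "p \<le> 1" and sk: "s \<le> k"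
  shows "(\<Sum>j\<in>{s..k}. real (k choose j) * p ^ j * (1 - p) ^ (k - j)) \<le> real (k choose s) * p ^ s"
proof -
  have "(\<Sum>j\<in>{s..k}. real (k choose j) * p ^ j * (1 - p) ^ (k - j))
     \<le> (\<Sum>j\<in>{s..k}. real (k choose j) * real (j choose s) * p ^ j * (1 - p) ^ (k - j))"
  proof (rule sum_mono)
    fix j assume j: "j \<in> {s..k}"
    then have "(1::real) \<le> real (j choose s)" by (simp add: Suc_leI zero_less_binomial)
    moreover have "0 \<le> real (k choose j) * p ^ j * (1 - p) ^ (k - j)" using p0 p1 by simp
    ultimately show "real (k choose j) * p ^ j * (1 - p) ^ (k - j) \<le> real (k choose j) * real (j choose s) * p ^ j * (1 - p) ^ (k - j)"
      using mult_left_mono[of 1 "real (j choose s)" "real (k choose j) * p ^ j * (1 - p) ^ (k - j)"]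
      by (simp add: algebra_simps)
  qed
  also have "\<dots> = (\<Sum>j\<in>{s..k}. real (k choose s) * p ^ s * (real ((k - s) choose (j - s)) * p ^ (j - s) * (1 - p) ^ ((k - s) - (j - s))))"
  proof (rule sum.cong[OF refl])
    fix j assume j: "j \<in> {s..k}"
    then have "(k choose j) * (j choose s) = (k choose s) * ((k - s) choose (j - s))"
      by (intro choose_mult) auto
    then have e: "real (k choose j) * real (j choose s) = real (k choose s) * real ((k - s) choose (j - s))"
      by (metis of_nat_mult)
    have pj: "p ^ j = p ^ s * p ^ (j - s)" using j by (simp flip: power_add)
    have kj: "k - j = (k - s) - (j - s)" using j by simp
    show "real (k choose j) * real (j choose s) * p ^ j * (1 - p) ^ (k - j) = real (k choose s) * p ^ s * (real ((k - s) choose (j - s)) * p ^ (j - s) * (1 - p) ^ ((k - s) - (j - s)))"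
      using e pj kj by (simp add: algebra_simps)
  qed
  also have "\<dots> = real (k choose s) * p ^ s * (\<Sum>j\<in>{s..k}. real ((k - s) choose (j - s)) * p ^ (j - s) * (1 - p) ^ ((k - s) - (j - s)))"
    by (simp add: sum_distrib_left)
  also have "(\<Sum>j\<in>{s..k}. real ((k - s) choose (j - s)) * p ^ (j - s) * (1 - p) ^ ((k - s) - (j - s)))
     = (\<Sum>i\<le>k - s. real ((k - s) choose i) * p ^ i * (1 - p) ^ ((k - s) - i))"
  proof -
    have img: "{s..k} = (\<lambda>i. i + s) ` {..k - s}"
      proof (rule set_eqI, rule iffI)
      fix x assume "x \<in> {s..k}" then have "x = (x - s) + s" "x - s \<in> {..k - s}" by auto
      then show "x \<in> (\<lambda>i. i + s) ` {..k - s}" by blast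
    qed (use sk in auto)
    show ?thesis unfolding img by (subst sum.reindex) (auto simp: inj_on_def)
  qed
  also have "\<dots> = (p + (1 - p)) ^ (k - s)" by (subst binomial_ring) simp
  also have "\<dots> = 1" by simp
  finally show ?thesis by simp
qed

lemma exp_term: "0 \<le> (x::real) \<Longrightarrow> x ^ s / fact s \<le> exp x"
proof -
  assume x: "0 \<le> x"
  have "(\<Sum>n\<in>{s}. x ^ n / fact n) \<le> (\<Sum>n. x ^ n / fact n)"
    using x summable_exp_generic[of x]
    by (intro sum_le_suminf) (auto simp: divide_inverse ac_simps)
  then show ?thesis by (simp add: exp_def divide_inverse ac_simps)
qed

lemma coeff_bound:
  assumes t: "t > 0" and s: "1 \<le> s" "s \<le> k"
  shows "sgt_coeff k t s \<le> exp (real k * t / (t + 1))"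
proof -
  define p where "p = 1 / (t + 1)"
  define u where "u = t / (t + 1)"
  have p0: "0 < p" and p1: "p < 1" using t by (auto simp: p_def)
  have tp: "t * p = u" by (simp add: p_def u_def)
  have u0: "0 \<le> u" using t by (simp add: u_def)
  have "measure_pmf.prob (binomial_pmf k p) {s..}
      = measure_pmf.prob (binomial_pmf k p) ({s..} \<inter> set_pmf (binomial_pmf k p))"
    by (simp add: measure_Int_set_pmf)
  also have "{s..} \<inter> set_pmf (binomial_pmf k p) = {s..k}" using p0 p1 by auto
  also have "measure_pmf.prob (binomial_pmf k p) {s..k} = (\<Sum>j\<in>{s..k}. real (k choose j) * p ^ j * (1 - p) ^ (k - j))"
    using p0 p1 by (simp add: measure_measure_pmf_finite)
  finally have P: "measure_pmf.prob (binomial_pmf k p) {s..} \<le> real (k choose s) * p ^ s"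
    using tail_bound[of p s k] p0 p1 s by simp
  have P0: "0 \<le> measure_pmf.prob (binomial_pmf k p) {s..}" by simp
  have "sgt_coeff k t s \<le> \<bar>(- t) ^ s\<bar> * measure_pmf.prob (binomial_pmf k p) {s..}"
    unfolding sgt_coeff_def p_def[symmetric] using P0
    by (metis abs_ge_minus_self abs_mult abs_of_nonneg mult_minus_left)
  also have "\<dots> = t ^ s * measure_pmf.prob (binomial_pmf k p) {s..}"
    using t by (simp add: power_abs)
  also have "\<dots> \<le> t ^ s * (real (k choose s) * p ^ s)"
    using P t by (intro mult_left_mono) auto
  also have "\<dots> = real (k choose s) * u ^ s" by (simp flip: tp add: power_mult_distrib)
  also have "\<dots> \<le> (real k * u) ^ s / fact s"
  proof -
    have "real (k choose s) * fact s \<le> real k ^ s"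
      using binomial_fact_pow[of k s] by (metis of_nat_fact of_nat_le_iff of_nat_mult of_nat_power)
    then have "real (k choose s) * fact s * u ^ s \<le> real k ^ s * u ^ s"
      using u0 by (intro mult_right_mono) auto
    then show ?thesis by (simp add: power_mult_distrib divide_simps algebra_simps)
  qed
  also have "\<dots> \<le> exp (real k * u)" using u0 by (intro exp_term) simp
  finally show ?thesis by (simp add: u_def)
qed

theorem theorem1:
  fixes k :: nat and t :: real and n :: "nat \<Rightarrow> nat"
  assumes "k \<ge> 1" and "t > 0" and "t \<ge> real k - 1"
    and "finite {s. 1 \<le> s \<and> n s \<noteq> 0}"
  shows "N_unseen k t n \<le> exp (real k * t / (t + 1)) * real (N_seen n)"
proof -
  define S where "S = {s. 1 \<le> s \<and> n s \<noteq> 0}"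
  define E where "E = exp (real k * t / (t + 1))"
  have "N_unseen k t n \<le> (\<Sum>s=1..k. E * real (n s))"
    unfolding N_unseen_def E_def
    using coeff_bound[OF assms(2)] by (intro sum_mono mult_right_mono) auto
  also have "\<dots> = E * real (\<Sum>s=1..k. n s)" by (simp add: sum_distrib_left)
  also have "(\<Sum>s=1..k. n s) = (\<Sum>s\<in>{1..k} \<inter> S. n s)"
    by (rule sum.mono_neutral_right) (auto simp: S_def)
  also have "\<dots> \<le> (\<Sum>s\<in>S. n s)"
    using assms(4) unfolding S_def by (intro sum_mono2) auto
  also have "(\<Sum>s\<in>S. n s) = N_seen n" by (simp add: N_seen_def S_def)
  finally show ?thesis
    by (simp add: E_def mult_left_mono order_trans)
qed

end
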